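(* Let $q\in[0,1)$. A $\mathbb C^{n\times m}$-valued function $T$ analytic at the origin is $q$-rational if and only if $T$ is the $q$-Borel transform of a $\mathbb C^{n\times m}$-valued rational function $F$ analytic at the origin, i.e. $T(z)=\sum_{k=0}^\infty\frac{z^k}{[k]_q!}F_k$ where $F(z)=\sum_{k=0}^\infty z^kF_k$.
   Context: $[0]_q=1$, $[k]_q=1+q+\cdots+q^{k-1}$ ($k\ge1$), $[k]_q!=\prod_{j=1}^k[j]_q$, $[0]_q!=1$. A $\mathbb C^{n\times m}$-valued function $T$ analytic at the origin is called $q$-rational if there exist $N\in\mathbb N_0$ and $(C,A,B)\in\mathbb C^{n\times N}\times\mathbb C^{N\times N}\times\mathbb C^{N\times m}$ such that $T(z)=C\prod_{j=0}^\infty(I_N-(1-q)zq^jA)^{-1}B$ in a neighbourhood of the origin (convention $q^0=1$). *)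

theory Defs
  imports "HOL-Analysis.Analysis" "HOL-Computational_Algebra.Polynomial_FPS"
    "Jordan_Normal_Form.Gauss_Jordan_Elimination"
begin

definition qint :: "real \<Rightarrow> nat \<Rightarrow> real" where
  "qint q k = (if k = 0 then 1 else (\<Sum>j<k. q ^ j))"

definition qfact :: "real \<Rightarrow> nat \<Rightarrow> real" where
  "qfact q k = (\<Prod>j = 1..k. qint q j)"

definition minv :: "complex mat \<Rightarrow> complex mat" where
  "minv M = the (mat_inverse M)"

fun qpartial :: "real \<Rightarrow> complex mat \<Rightarrow> complex \<Rightarrow> nat \<Rightarrow> complex mat" where
  "qpartial q A z 0 = 1\<^sub>m (dim_row A)"
| "qpartial q A z (Suc J) =
     qpartial q A z J * minv (1\<^sub>m (dim_row A) - ((complex_of_real (1 - q)) * z * (complex_of_real q) ^ J) \<cdot>\<^sub>m A)"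

text \<open>q-rationality of a C^{n x m}-valued function: in a neighbourhood of 0,
  T(z) = C (prod_{j>=0} (I_N - (1-q) z q^j A)^{-1}) B, the infinite product
  being the (entrywise) limit of the partial products.\<close>
definition q_rational :: "real \<Rightarrow> nat \<Rightarrow> nat \<Rightarrow> (complex \<Rightarrow> complex mat) \<Rightarrow> bool" where
  "q_rational q n m T \<longleftrightarrow>
     (\<exists>N C A B. C \<in> carrier_mat n N \<and> A \<in> carrier_mat N N \<and> B \<in> carrier_mat N m \<and>
       (\<exists>r>0. \<forall>z. cmod z < r \<longrightarrow>
          (\<forall>j. invertible_mat (1\<^sub>m N - ((complex_of_real (1 - q)) * z * (complex_of_real q) ^ j) \<cdot>\<^sub>m A)) \<and>
          (\<exists>P. P \<in> carrier_mat N N \<and>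
               (\<forall>i<N. \<forall>k<N. (\<lambda>J. qpartial q A z J $$ (i, k)) \<longlonglongrightarrow> P $$ (i, k)) \<and>
               T z = C * P * B)))"

definition analytic_at0_mat :: "nat \<Rightarrow> nat \<Rightarrow> (complex \<Rightarrow> complex mat) \<Rightarrow> bool" where
  "analytic_at0_mat n m T \<longleftrightarrow> (\<forall>z. T z \<in> carrier_mat n m) \<and>
     (\<forall>i<n. \<forall>j<m. (\<lambda>z. T z $$ (i, j)) analytic_on {0})"

text \<open>Taylor coefficient F_k of the rational matrix function F with entries
  p_ij / q_ij (q_ij(0) \<noteq> 0), i.e. F(z) = sum_k z^k F_k near 0.\<close>
definition rat_coeff :: "nat \<Rightarrow> nat \<Rightarrow> (nat \<Rightarrow> nat \<Rightarrow> complex poly) \<Rightarrow> (nat \<Rightarrow> nat \<Rightarrow> complex poly)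
    \<Rightarrow> nat \<Rightarrow> complex mat" where
  "rat_coeff n m p d k = mat n m (\<lambda>(i, j). fps_nth (fps_of_poly (p i j) / fps_of_poly (d i j)) k)"

definition q_Borel_of :: "real \<Rightarrow> nat \<Rightarrow> nat \<Rightarrow> (complex \<Rightarrow> complex mat)
    \<Rightarrow> (nat \<Rightarrow> nat \<Rightarrow> complex poly) \<Rightarrow> (nat \<Rightarrow> nat \<Rightarrow> complex poly) \<Rightarrow> bool" where
  "q_Borel_of q n m T p d \<longleftrightarrow>
     (\<exists>r>0. \<forall>z. cmod z < r \<longrightarrow> (\<forall>i<n. \<forall>j<m.
        (\<lambda>k. z ^ k / complex_of_real (qfact q k) * rat_coeff n m p d k $$ (i, j)) sums (T z $$ (i, j))))"

end

theory Submission
  imports Defs "Jordan_Normal_Form.Determinant"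
begin

lemma mult_entry:
  assumes "A \<in> carrier_mat a b" "B \<in> carrier_mat b c" "i < a" "j < c"
  shows "(A * B) $$ (i,j) = (\<Sum>k<b. A $$ (i,k) * B $$ (k,j))"
  using assms by (auto simp: scalar_prod_def atLeast0LessThan intro!: sum.cong)

lemma pow_commute:
  assumes "A \<in> carrier_mat N N"
  shows "A * A ^\<^sub>m k = A ^\<^sub>m k * A"
proof (induction k)
  case 0 then show ?case using assms by simp
next
  case (Suc k)
  have "A * A ^\<^sub>m Suc k = (A * A ^\<^sub>m k) * A"
    by (simp, rule assoc_mult_mat[symmetric]) (use assms in auto)
  also have "\<dots> = A ^\<^sub>m Suc k * A" using Suc by simp
  finally show ?case .
qed

lemma pow_Suc_left:
  assumes "A \<in> carrier_mat N N"
  shows "A ^\<^sub>m Suc k = A * A ^\<^sub>m k"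
  using pow_commute[OF assms] by simp

lemma qint_ge1: "0 \<le> q \<Longrightarrow> 1 \<le> qint q k"
proof (cases k)
  case 0 then show ?thesis by (simp add: qint_def)
next
  case (Suc k')
  assume q: "0 \<le> q"
  have "q ^ 0 \<le> (\<Sum>j<k. q ^ j)"
    by (rule member_le_sum) (use Suc q in auto)
  then show ?thesis using Suc by (simp add: qint_def)
qed

lemma qfact_ge1: "0 \<le> q \<Longrightarrow> 1 \<le> qfact q k"
  unfolding qfact_def by (rule prod_ge_1) (auto intro: qint_ge1)

lemma qfact_0[simp]: "qfact q 0 = 1" by (simp add: qfact_def)

lemma qfact_Suc: "qfact q (Suc k) = qfact q k * qint q (Suc k)"
  unfolding qfact_def by (simp add: atLeastAtMostSuc_conv mult.commute)

lemma qint_Suc_mult: "(1 - q) * qint q (Suc k) = 1 - q ^ Suc k"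
  unfolding qint_def using one_diff_power_eq[of q "Suc k"] by simp

definition msum :: "complex mat \<Rightarrow> real" where
  "msum A = (\<Sum>a<dim_row A. \<Sum>b<dim_col A. cmod (A $$ (a,b)))"

lemma msum_nonneg: "0 \<le> msum A"
  unfolding msum_def by (intro sum_nonneg) auto

lemma col_le_msum:
  assumes "A \<in> carrier_mat N N" "l < N"
  shows "(\<Sum>m<N. cmod (A $$ (m,l))) \<le> msum A"
  unfolding msum_def using assms
  by (auto intro!: sum_mono member_le_sum)

lemma entry_le_msum:
  assumes "A \<in> carrier_mat N N" "a < N" "b < N"
  shows "cmod (A $$ (a,b)) \<le> msum A"
proof -
  have "cmod (A $$ (a,b)) \<le> (\<Sum>b'<N. cmod (A $$ (a,b')))"
    by (rule member_le_sum[where f="\<lambda>b'. cmod (A $$ (a,b'))"]) (use assms in auto)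
  also have "\<dots> \<le> (\<Sum>a'<N. \<Sum>b'<N. cmod (A $$ (a',b')))"
    by (rule member_le_sum[where f="\<lambda>a'. \<Sum>b'<N. cmod (A $$ (a',b'))"]) (use assms in \<open>auto intro: sum_nonneg\<close>)
  finally show ?thesis unfolding msum_def using assms by simp
qed

lemma pow_entry_bound:
  assumes A: "A \<in> carrier_mat N N" and i: "i < N" and l: "l < N"
  shows "cmod ((A ^\<^sub>m k) $$ (i,l)) \<le> msum A ^ k"
  using l
proof (induction k arbitrary: l)
  case 0 then show ?case using A i by simp
next
  case (Suc k)
  have "(A ^\<^sub>m Suc k) $$ (i,l) = (A ^\<^sub>m k * A) $$ (i,l)" by simp
  also have "\<dots> = (\<Sum>m<N. (A ^\<^sub>m k) $$ (i,m) * A $$ (m,l))"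
    by (rule mult_entry[OF pow_carrier_mat[OF A] A i Suc.prems])
  also have "cmod \<dots> \<le> (\<Sum>m<N. cmod ((A ^\<^sub>m k) $$ (i,m)) * cmod (A $$ (m,l)))"
    by (rule order_trans[OF norm_sum]) (simp add: norm_mult)
  also have "\<dots> \<le> (\<Sum>m<N. msum A ^ k * cmod (A $$ (m,l)))"
    by (intro sum_mono mult_right_mono Suc.IH) auto
  also have "\<dots> = msum A ^ k * (\<Sum>m<N. cmod (A $$ (m,l)))"
    by (simp add: sum_distrib_left)
  also have "\<dots> \<le> msum A ^ k * msum A"
    by (intro mult_left_mono col_le_msum[OF A Suc.prems]) (simp add: msum_nonneg)
  finally show ?case by (simp add: mult.commute)
qed

definition eterm :: "real \<Rightarrow> complex mat \<Rightarrow> complex \<Rightarrow> nat \<Rightarrow> nat \<Rightarrow> nat \<Rightarrow> complex" where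
  "eterm q A z i l k = z ^ k / complex_of_real (qfact q k) * (A ^\<^sub>m k) $$ (i,l)"

definition Eser :: "real \<Rightarrow> complex mat \<Rightarrow> complex \<Rightarrow> complex mat" where
  "Eser q A z = mat (dim_row A) (dim_row A) (\<lambda>(i,l). \<Sum>k. eterm q A z i l k)"

lemma Eser_carrier: "A \<in> carrier_mat N N \<Longrightarrow> Eser q A z \<in> carrier_mat N N"
  unfolding Eser_def by auto

lemma Eser_index: "A \<in> carrier_mat N N \<Longrightarrow> i < N \<Longrightarrow> l < N \<Longrightarrow> Eser q A z $$ (i,l) = (\<Sum>k. eterm q A z i l k)"
  unfolding Eser_def by auto

lemma eterm_bound:
  assumes "0 \<le> q" "A \<in> carrier_mat N N" "i < N" "l < N"
  shows "norm (eterm q A z i l k) \<le> (cmod z * msum A) ^ k"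
proof -
  have "norm (eterm q A z i l k) = cmod z ^ k / qfact q k * cmod ((A ^\<^sub>m k) $$ (i,l))"
    unfolding eterm_def using qfact_ge1[OF assms(1), of k]
    by (simp add: norm_mult norm_divide norm_power)
  also have "\<dots> \<le> cmod z ^ k * cmod ((A ^\<^sub>m k) $$ (i,l))"
    using qfact_ge1[OF assms(1), of k]
    by (intro mult_right_mono) (auto simp: divide_le_eq intro: mult_le_cancel_left1[THEN iffD2])
  also have "\<dots> \<le> cmod z ^ k * msum A ^ k"
    by (intro mult_left_mono pow_entry_bound[OF assms(2-4)]) auto
  finally show ?thesis by (simp add: power_mult_distrib)
qed

lemma eterm_summable:
  assumes "0 \<le> q" "A \<in> carrier_mat N N" "i < N" "l < N" "cmod z * msum A < 1"
  shows "summable (\<lambda>k. norm (eterm q A z i l k))"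
  by (rule summable_comparison_test[OF _ summable_geometric[of "cmod z * msum A"]])
     (use assms eterm_bound[OF assms(1-4)] msum_nonneg in auto)

lemma cmod_qz: "0 \<le> q \<Longrightarrow> q < 1 \<Longrightarrow> cmod (complex_of_real q * z) \<le> cmod z"
  by (simp add: norm_mult mult_left_le_one_le)

lemma Eser_funeq:
  assumes q: "0 \<le> q" "q < 1" and A: "A \<in> carrier_mat N N" and z: "cmod z * msum A < 1"
  shows "(1\<^sub>m N - (complex_of_real (1-q) * z) \<cdot>\<^sub>m A) * Eser q A z = Eser q A (complex_of_real q * z)"
proof (rule eq_matI)
  fix i l assume "i < dim_row (Eser q A (complex_of_real q * z))" "l < dim_col (Eser q A (complex_of_real q * z))"
  hence i: "i < N" and l: "l < N" using A by (auto simp: Eser_def)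
  let ?w = "complex_of_real (1-q) * z"
  define b where "b m k = eterm q A z m l k" for m k
  define a where "a = b i"
  define c where "c k = z ^ k / complex_of_real (qfact q k) * (A ^\<^sub>m Suc k) $$ (i,l)" for k
  have zq: "cmod (complex_of_real q * z) * msum A < 1"
    using cmod_qz[OF q, of z] msum_nonneg[of A] z by (meson le_less_trans mult_right_mono)
  have sb: "summable (b m)" if "m < N" for m
    unfolding b_def by (rule summable_norm_cancel, rule eterm_summable[OF q(1) A that l z])
  have sqa: "summable (\<lambda>k. eterm q A (complex_of_real q * z) i l k)"
    by (rule summable_norm_cancel, rule eterm_summable[OF q(1) A i l zq])
  have qa: "eterm q A (complex_of_real q * z) i l k = complex_of_real q ^ k * a k" for k
    unfolding a_def b_def eterm_def by (simp add: power_mult_distrib)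
  have cdef: "c k = (\<Sum>m<N. A $$ (i,m) * b m k)" for k
  proof -
    have "(A ^\<^sub>m Suc k) $$ (i,l) = (A * A ^\<^sub>m k) $$ (i,l)" using pow_Suc_left[OF A] by simp
    also have "\<dots> = (\<Sum>m<N. A $$ (i,m) * (A ^\<^sub>m k) $$ (m,l))"
      by (rule mult_entry[OF A pow_carrier_mat[OF A] i l])
    finally show ?thesis unfolding c_def b_def eterm_def
      by (simp add: sum_distrib_left ac_simps)
  qed
  have sc: "summable c" unfolding cdef
    by (intro summable_sum summable_mult sb) auto
  have suminf_c: "suminf c = (\<Sum>m<N. A $$ (i,m) * suminf (b m))"
    unfolding cdef
    by (subst suminf_sum) (auto intro!: summable_mult sb sum.cong suminf_mult)
  have key: "?w * c k = a (Suc k) - complex_of_real q ^ Suc k * a (Suc k)" for k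
  proof -
    have ne: "qint q (Suc k) \<noteq> 0" using qint_ge1[OF q(1)] by (metis not_one_le_zero)
    have ne2: "qfact q k \<noteq> 0" using qfact_ge1[OF q(1)] by (metis not_one_le_zero)
    have e: "complex_of_real (1 - q) * complex_of_real (qint q (Suc k)) = 1 - complex_of_real q ^ Suc k"
      using arg_cong[OF qint_Suc_mult[of q k], of complex_of_real] by simp
    have "a (Suc k) - complex_of_real q ^ Suc k * a (Suc k) = (1 - complex_of_real q ^ Suc k) * a (Suc k)"
      by (simp add: algebra_simps)
    also have "\<dots> = complex_of_real (1 - q) * complex_of_real (qint q (Suc k)) * a (Suc k)"
      using e by simp
    also have "\<dots> = ?w * c k"
      unfolding a_def b_def eterm_def c_def qfact_Suc using ne ne2
      by (simp add: field_simps)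
    finally show ?thesis by simp
  qed
  have s1: "(\<lambda>k. a k - complex_of_real q ^ k * a k) sums (suminf a - (\<Sum>k. eterm q A (complex_of_real q * z) i l k))"
    unfolding qa[symmetric] by (intro sums_diff summable_sums sqa) (use sb i in \<open>simp add: a_def\<close>)
  have "(\<lambda>k. ?w * c k) sums (suminf a - (\<Sum>k. eterm q A (complex_of_real q * z) i l k))"
    unfolding key using s1 by (subst sums_Suc_iff) simp
  moreover have "(\<lambda>k. ?w * c k) sums (?w * suminf c)"
    by (intro sums_mult summable_sums sc)
  ultimately have eq: "?w * suminf c = suminf a - (\<Sum>k. eterm q A (complex_of_real q * z) i l k)"
    using sums_unique2 by blast
  have "((1\<^sub>m N - ?w \<cdot>\<^sub>m A) * Eser q A z) $$ (i,l)
      = (\<Sum>m<N. ((if i = m then 1 else 0) - ?w * A $$ (i,m)) * suminf (b m))"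
    using i l A by (subst mult_entry[of _ N N _ N]) (auto simp: Eser_index Eser_carrier b_def[abs_def] intro!: sum.cong)
  also have "\<dots> = (\<Sum>m<N. (if i = m then 1 else 0) * suminf (b m)) - (\<Sum>m<N. ?w * (A $$ (i,m) * suminf (b m)))"
    by (simp only: left_diff_distrib sum_subtractf mult.assoc)
  also have "\<dots> = suminf a - ?w * suminf c"
    using i by (simp add: suminf_c a_def sum_distrib_left if_distrib[of "\<lambda>x. x * _"] cong: if_cong)
  also have "\<dots> = Eser q A (complex_of_real q * z) $$ (i,l)"
    using eq i l A by (simp add: Eser_index)
  finally show "((1\<^sub>m N - ?w \<cdot>\<^sub>m A) * Eser q A z) $$ (i,l) = Eser q A (complex_of_real q * z) $$ (i,l)" .
next
  show "dim_row ((1\<^sub>m N - (complex_of_real (1-q) * z) \<cdot>\<^sub>m A) * Eser q A z) = dim_row (Eser q A (complex_of_real q * z))"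
    "dim_col ((1\<^sub>m N - (complex_of_real (1-q) * z) \<cdot>\<^sub>m A) * Eser q A z) = dim_col (Eser q A (complex_of_real q * z))"
    using A by (auto simp: Eser_def)
qed

lemma Eser_near_one:
  assumes q: "0 \<le> q" and A: "A \<in> carrier_mat N N" and i: "i < N" and l: "l < N"
    and w: "cmod w * msum A \<le> 1/2"
  shows "cmod (Eser q A w $$ (i,l) - 1\<^sub>m N $$ (i,l)) \<le> 2 * (cmod w * msum A)"
proof -
  define x where "x = cmod w * msum A"
  define f where "f = eterm q A w i l"
  have x0: "0 \<le> x" unfolding x_def using msum_nonneg by simp
  have x1: "x < 1" using w unfolding x_def by simp
  have snf: "summable (\<lambda>k. norm (f k))" unfolding f_def
    by (rule eterm_summable[OF q A i l]) (use w in simp)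
  have sf: "summable f" by (rule summable_norm_cancel[OF snf])
  have sn1: "summable (\<lambda>k. norm (f (Suc k)))" using summable_ignore_initial_segment[OF snf, of 1] by simp
  have f0: "f 0 = 1\<^sub>m N $$ (i,l)" unfolding f_def eterm_def using A by simp
  have "Eser q A w $$ (i,l) - 1\<^sub>m N $$ (i,l) = (\<Sum>k. f (Suc k))"
    using suminf_split_head[OF sf] f0 Eser_index[OF A i l, of q w] unfolding f_def by simp
  also have "cmod \<dots> \<le> (\<Sum>k. norm (f (Suc k)))"
    by (rule summable_norm) (use sn1 in simp)
  also have "\<dots> \<le> (\<Sum>k. x * x ^ k)"
  proof (rule suminf_le)
    show "norm (f (Suc k)) \<le> x * x ^ k" for k
      using eterm_bound[OF q A i l, of w "Suc k"] unfolding f_def x_def by simp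
    show "summable (\<lambda>k. norm (f (Suc k)))" by (rule sn1)
    show "summable (\<lambda>k. x * x ^ k)" by (rule summable_mult, rule summable_geometric) (use x0 x1 in simp)
  qed
  also have "\<dots> = x * (1 / (1 - x))"
  proof -
    have "(\<Sum>k. x * x ^ k) = x * (\<Sum>k. x ^ k)"
      by (rule suminf_mult, rule summable_geometric) (use x0 x1 in simp)
    also have "(\<Sum>k. x ^ k) = 1 / (1 - x)"
      by (rule suminf_geometric) (use x0 x1 in simp)
    finally show ?thesis .
  qed
  also have "\<dots> \<le> 2 * x"
  proof -
    have h: "x \<le> 1/2" using w unfolding x_def .
    have "x * 1 \<le> x * (2 * (1 - x))" by (rule mult_left_mono) (use h x0 in auto)
    then have "x \<le> 2 * x * (1 - x)" by (simp add: algebra_simps)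
    then show ?thesis using h by (simp add: pos_divide_le_eq)
  qed
  finally show ?thesis unfolding x_def .
qed

lemma det_tendsto:
  fixes M :: "'x \<Rightarrow> complex mat"
  assumes M: "\<And>x. M x \<in> carrier_mat N N" and L: "L \<in> carrier_mat N N"
    and lim: "\<And>i k. i < N \<Longrightarrow> k < N \<Longrightarrow> ((\<lambda>x. M x $$ (i,k)) \<longlongrightarrow> L $$ (i,k)) F"
  shows "((\<lambda>x. Determinant.det (M x)) \<longlongrightarrow> Determinant.det L) F"
proof -
  have e: "(\<lambda>x. Determinant.det (M x)) = (\<lambda>x. \<Sum>p\<in>{p. p permutes {0..<N}}. signof p * (\<Prod>i = 0..<N. M x $$ (i, p i)))"
    by (rule ext) (rule det_def'[OF M])
  show ?thesis unfolding e det_def'[OF L]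
  proof (rule tendsto_sum)
    fix p assume p: "p \<in> {p. p permutes {0..<N}}"
    have "((\<lambda>x. \<Prod>i = 0..<N. M x $$ (i, p i)) \<longlongrightarrow> (\<Prod>i = 0..<N. L $$ (i, p i))) F"
    proof (rule tendsto_prod)
      fix i assume i: "i \<in> {0..<N}"
      then have "p i \<in> {0..<N}" using permutes_in_image[of p "{0..<N}" i] p by simp
      then show "((\<lambda>x. M x $$ (i, p i)) \<longlongrightarrow> L $$ (i, p i)) F" using i by (intro lim) auto
    qed
    then show "((\<lambda>x. signof p * (\<Prod>i = 0..<N. M x $$ (i, p i))) \<longlongrightarrow> signof p * (\<Prod>i = 0..<N. L $$ (i, p i))) F"
      by (rule tendsto_mult[OF tendsto_const])
  qed
qed

lemma adj_tendsto:
  fixes M :: "'x \<Rightarrow> complex mat"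
  assumes M: "\<And>x. M x \<in> carrier_mat N N" and L: "L \<in> carrier_mat N N"
    and lim: "\<And>i k. i < N \<Longrightarrow> k < N \<Longrightarrow> ((\<lambda>x. M x $$ (i,k)) \<longlongrightarrow> L $$ (i,k)) F"
    and i: "i < N" and k: "k < N"
  shows "((\<lambda>x. adj_mat (M x) $$ (i,k)) \<longlongrightarrow> adj_mat L $$ (i,k)) F"
proof -
  have e: "adj_mat X $$ (i,k) = (-1)^(k+i) * Determinant.det (mat_delete X k i)" if "X \<in> carrier_mat N N" for X
    using that i k by (simp add: adj_mat_def cofactor_def)
  have "((\<lambda>x. Determinant.det (mat_delete (M x) k i)) \<longlongrightarrow> Determinant.det (mat_delete L k i)) F"
  proof (rule det_tendsto[where N="N - 1"])
    show "\<And>x. mat_delete (M x) k i \<in> carrier_mat (N - 1) (N - 1)" by (rule mat_delete_carrier[OF M])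
    show "mat_delete L k i \<in> carrier_mat (N - 1) (N - 1)" by (rule mat_delete_carrier[OF L])
    fix a b assume ab: "a < N - 1" "b < N - 1"
    have ee: "mat_delete X k i $$ (a,b) = X $$ (if a < k then a else Suc a, if b < i then b else Suc b)"
      if "X \<in> carrier_mat N N" for X
      using that ab by (simp add: mat_delete_def)
    show "((\<lambda>x. mat_delete (M x) k i $$ (a, b)) \<longlongrightarrow> mat_delete L k i $$ (a, b)) F"
      unfolding ee[OF M] ee[OF L] by (rule lim) (use ab in auto)
  qed
  then show ?thesis unfolding e[OF M] e[OF L] by (intro tendsto_mult tendsto_const)
qed

lemma adj_one: "adj_mat (1\<^sub>m N :: 'a :: comm_ring_1 mat) = 1\<^sub>m N"
proof -
  have "adj_mat (1\<^sub>m N :: 'a mat) * 1\<^sub>m N = Determinant.det (1\<^sub>m N :: 'a mat) \<cdot>\<^sub>m 1\<^sub>m N"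
    by (rule adj_mat(3)) simp
  moreover have "adj_mat (1\<^sub>m N :: 'a mat) \<in> carrier_mat N N" by (rule adj_mat(1)) simp
  moreover have "(1::'a) \<cdot>\<^sub>m 1\<^sub>m N = 1\<^sub>m N" by (rule eq_matI) auto
  ultimately show ?thesis by simp
qed

lemma minv_props:
  assumes M: "M \<in> carrier_mat N N" and d: "Determinant.det M \<noteq> 0"
  shows "minv M \<in> carrier_mat N N" "M * minv M = 1\<^sub>m N" "minv M * M = 1\<^sub>m N" "invertible_mat M"
proof -
  have u: "M \<in> Units (ring_mat TYPE(complex) N ())" by (rule det_non_zero_imp_unit[OF M d])
  have "mat_inverse M \<noteq> None" using mat_inverse(1)[OF M, where b="()"] u by blast
  then obtain B where B: "mat_inverse M = Some B" by blast
  from mat_inverse(2)[OF M B] have Bp: "M * B = 1\<^sub>m N" "B * M = 1\<^sub>m N" "B \<in> carrier_mat N N" by auto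
  show "minv M \<in> carrier_mat N N" "M * minv M = 1\<^sub>m N" "minv M * M = 1\<^sub>m N"
    unfolding minv_def B using Bp by auto
  show "invertible_mat M" unfolding invertible_mat_def inverts_mat_def square_mat.simps
    using Bp M by auto
qed



lemma cmod_qpow: "0 \<le> q \<Longrightarrow> q < 1 \<Longrightarrow> cmod (complex_of_real q ^ J * z) = q ^ J * cmod z"
  by (simp add: norm_mult norm_power)

lemma cmod_qpow_le: "0 \<le> q \<Longrightarrow> q < 1 \<Longrightarrow> cmod (complex_of_real q ^ J * z) \<le> cmod z"
  unfolding cmod_qpow by (simp add: mult_left_le_one_le power_le_one)

lemma qpartial_carrier:
  assumes A: "A \<in> carrier_mat N N"
    and d: "\<And>j. Determinant.det (1\<^sub>m N - (complex_of_real (1-q) * z * complex_of_real q ^ j) \<cdot>\<^sub>m A) \<noteq> 0"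
  shows "qpartial q A z J \<in> carrier_mat N N"
proof (induction J)
  case 0 then show ?case using A by simp
next
  case (Suc J)
  have "minv (1\<^sub>m N - (complex_of_real (1-q) * z * complex_of_real q ^ J) \<cdot>\<^sub>m A) \<in> carrier_mat N N"
    by (rule minv_props(1)[OF _ d]) (use A in auto)
  then show ?case using Suc A by simp
qed

lemma qpartial_Eser:
  assumes q: "0 \<le> q" "q < 1" and A: "A \<in> carrier_mat N N"
    and d: "\<And>j. Determinant.det (1\<^sub>m N - (complex_of_real (1-q) * z * complex_of_real q ^ j) \<cdot>\<^sub>m A) \<noteq> 0"
    and z: "cmod z * msum A < 1"
  shows "qpartial q A z J * Eser q A (complex_of_real q ^ J * z) = Eser q A z"
proof (induction J)
  case 0 then show ?case using A by (simp add: left_mult_one_mat[OF Eser_carrier[OF A]])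
next
  case (Suc J)
  define M where "M = 1\<^sub>m N - (complex_of_real (1-q) * z * complex_of_real q ^ J) \<cdot>\<^sub>m A"
  define P where "P = qpartial q A z J"
  define G where "G = Eser q A (complex_of_real q ^ J * z)"
  have Mc: "M \<in> carrier_mat N N" unfolding M_def using A by auto
  have dM: "Determinant.det M \<noteq> 0" unfolding M_def by (rule d)
  have Pc: "P \<in> carrier_mat N N" unfolding P_def by (rule qpartial_carrier[OF A d])
  have Gc: "G \<in> carrier_mat N N" unfolding G_def by (rule Eser_carrier[OF A])
  have Ic: "minv M \<in> carrier_mat N N" by (rule minv_props(1)[OF Mc dM])
  have z': "cmod (complex_of_real q ^ J * z) * msum A < 1"
    using cmod_qpow_le[OF q, of J z] msum_nonneg[of A] z by (meson le_less_trans mult_right_mono)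
  have "M * G = Eser q A (complex_of_real q * (complex_of_real q ^ J * z))"
    using Eser_funeq[OF q A z'] unfolding M_def G_def by (simp add: ac_simps)
  also have "complex_of_real q * (complex_of_real q ^ J * z) = complex_of_real q ^ Suc J * z" by simp
  finally have MG: "Eser q A (complex_of_real q ^ Suc J * z) = M * G" by simp
  have "qpartial q A z (Suc J) * Eser q A (complex_of_real q ^ Suc J * z) = (P * minv M) * (M * G)"
    unfolding MG using A by (simp add: P_def M_def)
  also have "\<dots> = P * (minv M * (M * G))" by (rule assoc_mult_mat[OF Pc Ic mult_carrier_mat[OF Mc Gc]])
  also have "minv M * (M * G) = (minv M * M) * G" by (rule assoc_mult_mat[OF Ic Mc Gc, symmetric])
  also have "\<dots> = G" using minv_props(3)[OF Mc dM] Gc by simp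
  finally show ?case using Suc unfolding P_def G_def by simp
qed


lemma det_small:
  assumes A: "A \<in> carrier_mat N N"
  shows "\<exists>\<delta>>0. \<forall>t. cmod t < \<delta> \<longrightarrow> Determinant.det (1\<^sub>m N - t \<cdot>\<^sub>m A) \<noteq> 0"
proof -
  have I: "1\<^sub>m N - (0::complex) \<cdot>\<^sub>m A = 1\<^sub>m N" by (rule eq_matI) (use A in auto)
  have "((\<lambda>t. Determinant.det (1\<^sub>m N - t \<cdot>\<^sub>m A)) \<longlongrightarrow> Determinant.det (1\<^sub>m N - (0::complex) \<cdot>\<^sub>m A)) (nhds 0)"
  proof (rule det_tendsto[where N=N])
    show "\<And>t. 1\<^sub>m N - t \<cdot>\<^sub>m A \<in> carrier_mat N N" using A by auto
    show "1\<^sub>m N - (0::complex) \<cdot>\<^sub>m A \<in> carrier_mat N N" using A by auto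
    fix i k assume ik: "i < N" "k < N"
    have "((\<lambda>t::complex. (if i = k then 1 else 0) - t * A $$ (i,k)) \<longlongrightarrow> (if i = k then 1 else 0) - 0 * A $$ (i,k)) (nhds 0)"
      by (rule tendsto_diff[OF tendsto_const tendsto_mult[OF filterlim_ident tendsto_const]])
    then show "((\<lambda>t. (1\<^sub>m N - t \<cdot>\<^sub>m A) $$ (i, k)) \<longlongrightarrow> (1\<^sub>m N - 0 \<cdot>\<^sub>m A) $$ (i, k)) (nhds 0)"
      using ik A by simp
  qed
  then have "((\<lambda>t. Determinant.det (1\<^sub>m N - t \<cdot>\<^sub>m A)) \<longlongrightarrow> 1) (nhds (0::complex))" unfolding I by simp
  then have "eventually (\<lambda>t. Determinant.det (1\<^sub>m N - t \<cdot>\<^sub>m A) \<noteq> 0) (nhds (0::complex))"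
    by (rule tendsto_imp_eventually_ne) simp
  then obtain \<delta> where "\<delta> > 0" "\<forall>t. dist t 0 < \<delta> \<longrightarrow> Determinant.det (1\<^sub>m N - t \<cdot>\<^sub>m A) \<noteq> 0"
    unfolding eventually_nhds_metric by blast
  then show ?thesis by auto
qed

lemma main_lim:
  assumes q: "0 \<le> q" "q < 1" and A: "A \<in> carrier_mat N N"
  shows "\<exists>r>0. \<forall>z. cmod z < r \<longrightarrow>
     (\<forall>j. Determinant.det (1\<^sub>m N - (complex_of_real (1-q) * z * complex_of_real q ^ j) \<cdot>\<^sub>m A) \<noteq> 0) \<and>
     cmod z * msum A < 1 \<and>
     (\<forall>i<N. \<forall>k<N. (\<lambda>J. qpartial q A z J $$ (i,k)) \<longlonglongrightarrow> Eser q A z $$ (i,k))"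
proof -
  define s where "s = msum A"
  have s0: "0 \<le> s" unfolding s_def by (rule msum_nonneg)
  obtain \<delta> where \<delta>: "\<delta> > 0" "\<And>t. cmod t < \<delta> \<Longrightarrow> Determinant.det (1\<^sub>m N - t \<cdot>\<^sub>m A) \<noteq> 0"
    using det_small[OF A] by blast
  define r where "r = min \<delta> (1 / (2 * (s + 1)))"
  have r0: "r > 0" unfolding r_def using \<delta>(1) s0 by auto
  show ?thesis
  proof (intro exI[of _ r] conjI allI impI r0)
    fix z :: complex assume zr: "cmod z < r"
    have zs: "cmod z * s \<le> 1/2"
    proof -
      have "cmod z \<le> 1 / (2 * (s + 1))" using zr unfolding r_def by simp
      then have "cmod z * s \<le> 1 / (2 * (s + 1)) * s" by (rule mult_right_mono) (use s0 in simp)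
      also have "\<dots> \<le> 1/2" using s0 by (simp add: field_simps)
      finally show ?thesis .
    qed
    then show zs1: "cmod z * msum A < 1" unfolding s_def by simp
    have d: "Determinant.det (1\<^sub>m N - (complex_of_real (1-q) * z * complex_of_real q ^ j) \<cdot>\<^sub>m A) \<noteq> 0" for j
    proof (rule \<delta>(2))
      have "cmod (complex_of_real (1-q) * z * complex_of_real q ^ j) = (1 - q) * (q ^ j * cmod z)"
        using q by (simp add: norm_mult norm_power del: of_real_diff)
      also have "\<dots> \<le> 1 * cmod z"
        by (intro mult_mono mult_left_le_one_le power_le_one) (use q in auto)
      finally show "cmod (complex_of_real (1-q) * z * complex_of_real q ^ j) < \<delta>"
        using zr unfolding r_def by simp
    qed
    then show "\<And>j. Determinant.det (1\<^sub>m N - (complex_of_real (1-q) * z * complex_of_real q ^ j) \<cdot>\<^sub>m A) \<noteq> 0" .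
    define G where "G J = Eser q A (complex_of_real q ^ J * z)" for J
    define E where "E = Eser q A z"
    have Gc: "G J \<in> carrier_mat N N" for J unfolding G_def by (rule Eser_carrier[OF A])
    have Ec: "E \<in> carrier_mat N N" unfolding E_def by (rule Eser_carrier[OF A])
    have PG: "qpartial q A z J * G J = E" for J
      unfolding G_def E_def by (rule qpartial_Eser[OF q A d zs1])
    have Pc: "qpartial q A z J \<in> carrier_mat N N" for J by (rule qpartial_carrier[OF A d])
    have qJ: "(\<lambda>J. q ^ J) \<longlonglongrightarrow> 0" by (rule LIMSEQ_power_zero) (use q in simp)
    have Glim: "(\<lambda>J. G J $$ (a,b)) \<longlonglongrightarrow> 1\<^sub>m N $$ (a,b)" if ab: "a < N" "b < N" for a b
    proof -
      have "(\<lambda>J. G J $$ (a,b) - 1\<^sub>m N $$ (a,b)) \<longlonglongrightarrow> 0"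
      proof (rule Lim_null_comparison[where g="\<lambda>J. 2 * ((q ^ J * cmod z) * s)"])
        show "\<forall>\<^sub>F J in sequentially. norm (G J $$ (a, b) - 1\<^sub>m N $$ (a, b)) \<le> 2 * (q ^ J * cmod z * s)"
        proof (rule always_eventually, rule allI)
          fix J
          have le: "cmod (complex_of_real q ^ J * z) * msum A \<le> 1/2"
            using cmod_qpow_le[OF q, of J z] zs s0 unfolding s_def by (meson mult_right_mono order_trans)
          show "norm (G J $$ (a, b) - 1\<^sub>m N $$ (a, b)) \<le> 2 * (q ^ J * cmod z * s)"
            using Eser_near_one[OF q(1) A ab le] unfolding G_def s_def cmod_qpow[OF q] .
        qed
        show "(\<lambda>J. 2 * (q ^ J * cmod z * s)) \<longlonglongrightarrow> 0"
          using tendsto_mult[OF tendsto_const tendsto_mult[OF tendsto_mult[OF qJ tendsto_const] tendsto_const], of 2 "cmod z" s]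
          by simp
      qed
      then show ?thesis by (rule LIM_zero_cancel)
    qed
    have detlim: "(\<lambda>J. Determinant.det (G J)) \<longlonglongrightarrow> 1"
      using det_tendsto[where M=G and L="1\<^sub>m N" and N=N, OF Gc _ Glim] by simp
    have adjlim: "(\<lambda>J. adj_mat (G J) $$ (a,b)) \<longlonglongrightarrow> 1\<^sub>m N $$ (a,b)" if "a < N" "b < N" for a b
      using adj_tendsto[where M=G and L="1\<^sub>m N" and N=N, OF Gc _ Glim that] by (simp add: adj_one)
    have ev: "eventually (\<lambda>J. Determinant.det (G J) \<noteq> 0) sequentially"
      by (rule tendsto_imp_eventually_ne[OF detlim]) simp
    fix i k assume ik: "i < N" "k < N"
    have ident: "qpartial q A z J $$ (i,k) = (E * adj_mat (G J)) $$ (i,k) / Determinant.det (G J)"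
      if dG: "Determinant.det (G J) \<noteq> 0" for J
    proof -
      define P where "P = qpartial q A z J"
      have adjc: "adj_mat (G J) \<in> carrier_mat N N" by (rule adj_mat(1)[OF Gc])
      have "E * adj_mat (G J) = (P * G J) * adj_mat (G J)" unfolding P_def PG ..
      also have "\<dots> = P * (G J * adj_mat (G J))" by (rule assoc_mult_mat[OF Pc[of J, folded P_def] Gc adjc])
      also have "\<dots> = P * (Determinant.det (G J) \<cdot>\<^sub>m 1\<^sub>m N)" by (simp add: adj_mat(2)[OF Gc])
      also have "\<dots> = Determinant.det (G J) \<cdot>\<^sub>m (P * 1\<^sub>m N)"
        by (rule mult_smult_distrib[OF Pc[of J, folded P_def] one_carrier_mat])
      also have "\<dots> = Determinant.det (G J) \<cdot>\<^sub>m P" using Pc[of J, folded P_def] by simp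
      finally have "(E * adj_mat (G J)) $$ (i,k) = Determinant.det (G J) * P $$ (i,k)"
        using ik Pc[of J, folded P_def] by simp
      then show ?thesis using dG unfolding P_def by (simp add: field_simps)
    qed
    have "(\<lambda>J. (E * adj_mat (G J)) $$ (i,k)) \<longlonglongrightarrow> (\<Sum>m<N. E $$ (i,m) * 1\<^sub>m N $$ (m,k))"
    proof -
      have e: "(E * adj_mat (G J)) $$ (i,k) = (\<Sum>m<N. E $$ (i,m) * adj_mat (G J) $$ (m,k))" for J
        by (rule mult_entry[OF Ec adj_mat(1)[OF Gc] ik])
      show ?thesis unfolding e
        by (rule tendsto_sum, rule tendsto_mult[OF tendsto_const adjlim]) (use ik in auto)
    qed
    also have "(\<Sum>m<N. E $$ (i,m) * 1\<^sub>m N $$ (m,k)) = E $$ (i,k)"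
      using mult_entry[OF Ec one_carrier_mat ik] Ec ik by simp
    finally have l1: "(\<lambda>J. (E * adj_mat (G J)) $$ (i,k) / Determinant.det (G J)) \<longlonglongrightarrow> E $$ (i,k) / 1"
      by (rule tendsto_divide[OF _ detlim]) simp
    have "\<forall>\<^sub>F J in sequentially. (E * adj_mat (G J)) $$ (i,k) / Determinant.det (G J) = qpartial q A z J $$ (i,k)"
      using ev by eventually_elim (simp add: ident)
    from tendsto_cong[OF this] l1 show "(\<lambda>J. qpartial q A z J $$ (i,k)) \<longlonglongrightarrow> Eser q A z $$ (i,k)"
      unfolding E_def by simp
  qed
qed


lemma CEB_sums:
  assumes q: "0 \<le> q" and C: "C \<in> carrier_mat n N" and A: "A \<in> carrier_mat N N" and B: "B \<in> carrier_mat N m"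
    and z: "cmod z * msum A < 1" and i: "i < n" and j: "j < m"
  shows "(\<lambda>k. z ^ k / complex_of_real (qfact q k) * (C * A ^\<^sub>m k * B) $$ (i,j)) sums ((C * Eser q A z * B) $$ (i,j))"
proof -
  have e: "(C * X * B) $$ (i,j) = (\<Sum>b<N. (\<Sum>a<N. C $$ (i,a) * X $$ (a,b)) * B $$ (b,j))"
    if X: "X \<in> carrier_mat N N" for X
  proof -
    have "(C * X * B) $$ (i,j) = (\<Sum>b<N. (C * X) $$ (i,b) * B $$ (b,j))"
      by (rule mult_entry[OF mult_carrier_mat[OF C X] B i j])
    also have "\<dots> = (\<Sum>b<N. (\<Sum>a<N. C $$ (i,a) * X $$ (a,b)) * B $$ (b,j))"
      by (intro sum.cong refl, subst mult_entry[OF C X i]) auto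
    finally show ?thesis .
  qed
  have t: "z ^ k / complex_of_real (qfact q k) * (C * A ^\<^sub>m k * B) $$ (i,j)
     = (\<Sum>b<N. (\<Sum>a<N. C $$ (i,a) * eterm q A z a b k) * B $$ (b,j))" for k
    unfolding e[OF pow_carrier_mat[OF A]] eterm_def
    by (simp add: sum_distrib_left sum_distrib_right ac_simps)
  have "(\<lambda>k. \<Sum>b<N. (\<Sum>a<N. C $$ (i,a) * eterm q A z a b k) * B $$ (b,j))
     sums (\<Sum>b<N. (\<Sum>a<N. C $$ (i,a) * Eser q A z $$ (a,b)) * B $$ (b,j))"
  proof (intro sums_sum sums_mult2 sums_mult)
    fix a b assume "a \<in> {..<N}" "b \<in> {..<N}"
    then have ab: "a < N" "b < N" by auto
    show "(\<lambda>k. eterm q A z a b k) sums Eser q A z $$ (a,b)"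
      unfolding Eser_index[OF A ab]
      by (rule summable_sums, rule summable_norm_cancel, rule eterm_summable[OF q A ab z])
  qed
  then show ?thesis unfolding t e[OF Eser_carrier[OF A]] .
qed

interpretation fps_poly_hom: comm_ring_hom "fps_of_poly :: complex poly \<Rightarrow> complex fps"
  by unfold_locales (simp_all add: fps_of_poly_add fps_of_poly_mult)

lemma (in comm_ring_hom) hom_adj_mat:
  assumes A: "A \<in> carrier_mat N N"
  shows "adj_mat (map_mat hom A) = map_mat hom (adj_mat A)"
proof (rule eq_matI)
  fix i j assume "i < dim_row (map_mat hom (adj_mat A))" "j < dim_col (map_mat hom (adj_mat A))"
  then have ij: "i < N" "j < N" using A by (auto simp: adj_mat_def)
  have md: "mat_delete (map_mat hom A) j i = map_mat hom (mat_delete A j i)"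
    by (rule eq_matI) (use A ij in \<open>auto simp: mat_delete_def\<close>)
  show "adj_mat (map_mat hom A) $$ (i, j) = map_mat hom (adj_mat A) $$ (i, j)"
    using A ij by (simp add: adj_mat_def cofactor_def md hom_distribs)
qed (use A in \<open>auto simp: adj_mat_def\<close>)

lemma rational_part:
  fixes C A B :: "complex mat"
  assumes C: "C \<in> carrier_mat n N" and A: "A \<in> carrier_mat N N" and B: "B \<in> carrier_mat N m"
  shows "\<exists>p d. (\<forall>i<n. \<forall>j<m. poly (d i j) 0 \<noteq> 0) \<and>
     (\<forall>i<n. \<forall>j<m. \<forall>k. fps_nth (fps_of_poly (p i j) / fps_of_poly (d i j)) k = (C * A ^\<^sub>m k * B) $$ (i,j))"
proof -
  define Mp :: "complex poly mat" where
    "Mp = mat N N (\<lambda>(a,b). [:if a = b then 1 else 0:] - [:0, A $$ (a,b):])"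
  define M' where "M' = map_mat fps_of_poly Mp"
  define G :: "complex fps mat" where "G = mat N N (\<lambda>(a,b). Abs_fps (\<lambda>k. (A ^\<^sub>m k) $$ (a,b)))"
  define C' where "C' = map_mat fps_of_poly (map_mat (\<lambda>c. [:c:]) C)"
  define B' where "B' = map_mat fps_of_poly (map_mat (\<lambda>c. [:c:]) B)"
  have Mpc: "Mp \<in> carrier_mat N N" unfolding Mp_def by simp
  have M'c: "M' \<in> carrier_mat N N" unfolding M'_def Mp_def by simp
  have Gc: "G \<in> carrier_mat N N" unfolding G_def by simp
  have C'c: "C' \<in> carrier_mat n N" unfolding C'_def using C by simp
  have B'c: "B' \<in> carrier_mat N m" unfolding B'_def using B by simp
  have M'e: "M' $$ (a,b) = fps_const (if a = b then 1 else 0) - fps_const (A $$ (a,b)) * fps_X"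
    if "a < N" "b < N" for a b
    using that unfolding M'_def Mp_def
    by (simp add: fps_of_poly_diff fps_of_poly_const fps_of_poly_pCons)
  have MG: "M' * G = 1\<^sub>m N"
  proof (rule eq_matI)
    fix a b assume "a < dim_row (1\<^sub>m N :: complex fps mat)" "b < dim_col (1\<^sub>m N :: complex fps mat)"
    then have ab: "a < N" "b < N" by auto
    show "(M' * G) $$ (a,b) = 1\<^sub>m N $$ (a,b)"
    proof (rule fps_ext)
      fix k
      have nth: "fps_nth ((fps_const (if a = c then 1 else 0) - fps_const (A $$ (a,c)) * fps_X) * G $$ (c,b)) k
          = (if a = c then (A ^\<^sub>m k) $$ (c,b) else 0) - (if k = 0 then 0 else A $$ (a,c) * (A ^\<^sub>m (k - 1)) $$ (c,b))"
        if c: "c < N" for c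
      proof -
        have "(fps_const (if a = c then 1 else 0) - fps_const (A $$ (a,c)) * fps_X) * G $$ (c,b)
           = fps_const (if a = c then 1 else 0) * G $$ (c,b) - fps_const (A $$ (a,c)) * (fps_X * G $$ (c,b))"
          by (simp add: algebra_simps)
        then show ?thesis using c ab unfolding G_def by simp
      qed
      have "fps_nth ((M' * G) $$ (a,b)) k = (\<Sum>c<N. fps_nth ((fps_const (if a = c then 1 else 0) - fps_const (A $$ (a,c)) * fps_X) * G $$ (c,b)) k)"
        using ab by (simp add: mult_entry[OF M'c Gc ab] fps_sum_nth M'e)
      also have "\<dots> = (\<Sum>c<N. (if a = c then (A ^\<^sub>m k) $$ (c,b) else 0) - (if k = 0 then 0 else A $$ (a,c) * (A ^\<^sub>m (k - 1)) $$ (c,b)))"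
        by (rule sum.cong[OF refl]) (simp add: nth)
      also have "\<dots> = (A ^\<^sub>m k) $$ (a,b) - (if k = 0 then 0 else (A * A ^\<^sub>m (k - 1)) $$ (a,b))"
        using ab by (simp add: sum_subtractf mult_entry[OF A pow_carrier_mat[OF A] ab])
      also have "\<dots> = fps_nth (1\<^sub>m N $$ (a,b)) k"
      proof (cases k)
        case 0 then show ?thesis using ab A by simp
      next
        case (Suc k') then show ?thesis using ab pow_Suc_left[OF A, of k'] by simp
      qed
      finally show "fps_nth ((M' * G) $$ (a,b)) k = fps_nth (1\<^sub>m N $$ (a,b)) k" .
    qed
  qed (use M'c Gc in auto)
  define d where "d = Determinant.det Mp"
  have fd: "fps_of_poly d = Determinant.det M'" unfolding d_def M'_def by simp
  have "Determinant.det M' * Determinant.det G = 1"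
    using det_mult[OF M'c Gc] MG by simp
  then have "fps_nth (Determinant.det M' * Determinant.det G) 0 = 1" by simp
  then have d0: "fps_nth (fps_of_poly d) 0 \<noteq> 0" unfolding fd by auto
  have adjM: "adj_mat M' = Determinant.det M' \<cdot>\<^sub>m G"
  proof -
    have adjc: "adj_mat M' \<in> carrier_mat N N" by (rule adj_mat(1)[OF M'c])
    have "adj_mat M' = adj_mat M' * (M' * G)" unfolding MG using adjc by simp
    also have "\<dots> = (adj_mat M' * M') * G" by (rule assoc_mult_mat[OF adjc M'c Gc, symmetric])
    also have "\<dots> = (Determinant.det M' \<cdot>\<^sub>m 1\<^sub>m N) * G" unfolding adj_mat(3)[OF M'c] ..
    also have "\<dots> = Determinant.det M' \<cdot>\<^sub>m G" using Gc by (simp add: mult_smult_assoc_mat[OF one_carrier_mat Gc])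
    finally show ?thesis .
  qed
  define p where "p i j = (map_mat (\<lambda>c. [:c:]) C * adj_mat Mp * map_mat (\<lambda>c. [:c:]) B) $$ (i,j)" for i j
  have fp: "fps_of_poly (p i j) = fps_of_poly d * (C' * G * B') $$ (i,j)" if ij: "i < n" "j < m" for i j
  proof -
    have Cc: "map_mat (\<lambda>c. [:c:]) C \<in> carrier_mat n N" using C by simp
    have Bc: "map_mat (\<lambda>c. [:c:]) B \<in> carrier_mat N m" using B by simp
    have aMp: "adj_mat Mp \<in> carrier_mat N N" by (rule adj_mat(1)[OF Mpc])
    have "fps_of_poly (p i j) = map_mat fps_of_poly (map_mat (\<lambda>c. [:c:]) C * adj_mat Mp * map_mat (\<lambda>c. [:c:]) B) $$ (i,j)"
      unfolding p_def using ij C B by simp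
    also have "map_mat fps_of_poly (map_mat (\<lambda>c. [:c:]) C * adj_mat Mp * map_mat (\<lambda>c. [:c:]) B) = C' * adj_mat M' * B'"
      unfolding C'_def B'_def M'_def
      by (simp add: fps_poly_hom.mat_hom_mult[OF mult_carrier_mat[OF Cc aMp] Bc]
          fps_poly_hom.mat_hom_mult[OF Cc aMp] fps_poly_hom.hom_adj_mat[OF Mpc])
    also have "C' * adj_mat M' * B' = Determinant.det M' \<cdot>\<^sub>m (C' * G * B')"
      unfolding adjM using C'c Gc B'c
      by (simp add: mult_smult_distrib[OF C'c Gc] mult_smult_assoc_mat[OF mult_carrier_mat[OF C'c Gc] B'c])
    finally show ?thesis using ij C'c B'c fd by simp
  qed
  have Xe: "fps_nth ((C' * G * B') $$ (i,j)) k = (C * A ^\<^sub>m k * B) $$ (i,j)" if ij: "i < n" "j < m" for i j k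
  proof -
    have "(C' * G * B') $$ (i,j) = (\<Sum>b<N. (\<Sum>a<N. C' $$ (i,a) * G $$ (a,b)) * B' $$ (b,j))"
      using ij by (simp add: mult_entry[OF mult_carrier_mat[OF C'c Gc] B'c ij] mult_entry[OF C'c Gc])
    moreover have "(C * A ^\<^sub>m k * B) $$ (i,j) = (\<Sum>b<N. (\<Sum>a<N. C $$ (i,a) * (A ^\<^sub>m k) $$ (a,b)) * B $$ (b,j))"
      using ij by (simp add: mult_entry[OF mult_carrier_mat[OF C pow_carrier_mat[OF A]] B ij] mult_entry[OF C pow_carrier_mat[OF A]])
    ultimately show ?thesis using ij C B
      by (simp add: fps_sum_nth C'_def B'_def G_def fps_of_poly_const)
  qed
  have P1: "\<forall>i<n. \<forall>j<m. poly d 0 \<noteq> 0" using d0 by (simp add: poly_0_coeff_0)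
  have P2: "\<forall>i<n. \<forall>j<m. \<forall>k. fps_nth (fps_of_poly (p i j) / fps_of_poly d) k = (C * A ^\<^sub>m k * B) $$ (i,j)"
  proof (intro allI impI)
    fix i j k assume ij: "i < n" "j < m"
    have "fps_of_poly (p i j) / fps_of_poly d = (C' * G * B') $$ (i,j)"
      unfolding fp[OF ij] fps_divide_unit[OF d0]
      using inverse_mult_eq_1[OF d0] by (simp add: ac_simps)
    then show "fps_nth (fps_of_poly (p i j) / fps_of_poly d) k = (C * A ^\<^sub>m k * B) $$ (i,j)"
      using Xe[OF ij] by simp
  qed
  show ?thesis by (rule exI[of _ p], rule exI[of _ "\<lambda>i j. d"]) (use P1 P2 in simp)
qed


lemma sum_group:
  fixes L n :: nat and g :: "nat \<Rightarrow> 'a :: comm_monoid_add"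
  shows "(\<Sum>y<L*n. g y) = (\<Sum>t<L. \<Sum>i<n. g (t*n + i))"
proof (induction L)
  case 0 then show ?case by simp
next
  case (Suc L)
  have u: "{..<Suc L * n} = {..<L*n} \<union> {L*n..<L*n+n}" by auto
  have "(\<Sum>y<Suc L * n. g y) = (\<Sum>y<L*n. g y) + (\<Sum>y\<in>{L*n..<L*n+n}. g y)"
    unfolding u by (rule sum.union_disjoint) auto
  also have "(\<Sum>y\<in>{L*n..<L*n+n}. g y) = (\<Sum>i<n. g (L*n + i))"
    by (rule sum.reindex_bij_witness[of _ "\<lambda>i. L*n + i" "\<lambda>y. y - L*n"]) auto
  finally show ?case using Suc by simp
qed

lemma sum_reindex_rev:
  fixes L Dg :: nat and c :: "nat \<Rightarrow> 'a :: comm_semiring_1" and h :: "nat \<Rightarrow> 'a"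
  assumes "Dg \<le> L"
  shows "(\<Sum>t<L. (if 1 \<le> L - t \<and> L - t \<le> Dg then c (L - t) else 0) * h t) = (\<Sum>l=1..Dg. c l * h (L - l))"
proof -
  have "(\<Sum>t<L. (if 1 \<le> L - t \<and> L - t \<le> Dg then c (L - t) else 0) * h t)
      = (\<Sum>t\<in>{L-Dg..<L}. (if 1 \<le> L - t \<and> L - t \<le> Dg then c (L - t) else 0) * h t)"
    by (rule sum.mono_neutral_right) auto
  also have "\<dots> = (\<Sum>t\<in>{L-Dg..<L}. c (L - t) * h t)"
    by (rule sum.cong) auto
  also have "\<dots> = (\<Sum>l=1..Dg. c l * h (L - l))"
    by (rule sum.reindex_bij_witness[of _ "\<lambda>l. L - l" "\<lambda>t. L - t"]) (use assms in auto)
  finally show ?thesis .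
qed

lemma realize:
  fixes f :: "nat \<Rightarrow> nat \<Rightarrow> nat \<Rightarrow> complex" and c :: "nat \<Rightarrow> complex"
  assumes L1: "1 \<le> L" and DL: "Dg \<le> L"
    and rec: "\<And>i j k. i < n \<Longrightarrow> j < m \<Longrightarrow> L \<le> k \<Longrightarrow> f i j k = (\<Sum>l=1..Dg. c l * f i j (k - l))"
  shows "\<exists>N C A B. C \<in> carrier_mat n N \<and> A \<in> carrier_mat N N \<and> B \<in> carrier_mat N m \<and>
     (\<forall>i<n. \<forall>j<m. \<forall>k. (C * A ^\<^sub>m k * B) $$ (i,j) = f i j k)"
proof -
  define NN where "NN = L * n"
  define a where "a x t = (if Suc (x div n) < L then (if t = Suc (x div n) then 1 else 0)
      else (if 1 \<le> L - t \<and> L - t \<le> Dg then c (L - t) else 0))" for x t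
  define A :: "complex mat" where "A = mat NN NN (\<lambda>(x,y). if x mod n = y mod n then a x (y div n) else 0)"
  define X :: "nat \<Rightarrow> complex mat" where "X k = mat NN m (\<lambda>(x,j). f (x mod n) j (k + x div n))" for k
  define C :: "complex mat" where "C = mat n NN (\<lambda>(i,x). if x = i then 1 else 0)"
  have Ac: "A \<in> carrier_mat NN NN" unfolding A_def by simp
  have Xc: "X k \<in> carrier_mat NN m" for k unfolding X_def by simp
  have Cc: "C \<in> carrier_mat n NN" unfolding C_def by simp
  have AX: "A * X k = X (Suc k)" for k
  proof (rule eq_matI)
    fix x j assume "x < dim_row (X (Suc k))" "j < dim_col (X (Suc k))"
    then have x: "x < NN" and j: "j < m" unfolding X_def by auto
    then have n0: "0 < n" unfolding NN_def by (cases n) auto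
    define i0 where "i0 = x mod n"
    define t0 where "t0 = x div n"
    have i0: "i0 < n" unfolding i0_def using n0 by simp
    have t0: "t0 < L" unfolding t0_def using x n0 unfolding NN_def
      by (simp add: div_less_iff_less_mult)
    have "(A * X k) $$ (x,j) = (\<Sum>y<NN. A $$ (x,y) * X k $$ (y,j))"
      by (rule mult_entry[OF Ac Xc x j])
    also have "\<dots> = (\<Sum>t<L. \<Sum>i<n. A $$ (x, t*n+i) * X k $$ (t*n+i, j))"
      unfolding NN_def by (rule sum_group)
    also have "\<dots> = (\<Sum>t<L. \<Sum>i<n. (if i0 = i then a x t else 0) * f i j (k + t))"
    proof (intro sum.cong refl)
      fix t i assume "t \<in> {..<L}" "i \<in> {..<n}"
      then have ti: "t < L" "i < n" by auto
      have lt: "t * n + i < NN"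
      proof -
        have "t * n + i < Suc t * n" using ti by simp
        also have "Suc t * n \<le> L * n" using ti by (intro mult_le_mono1) auto
        finally show ?thesis unfolding NN_def .
      qed
      have md: "(t*n+i) mod n = i" "(t*n+i) div n = t" using ti by auto
      show "A $$ (x, t*n+i) * X k $$ (t*n+i, j) = (if i0 = i then a x t else 0) * f i j (k + t)"
        unfolding A_def X_def using x lt j md by (simp add: i0_def)
    qed
    also have "\<dots> = (\<Sum>t<L. a x t * f i0 j (k + t))"
      using i0 by (simp add: if_distrib[of "\<lambda>v. v * _"] cong: if_cong)
    also have "\<dots> = f i0 j (Suc k + t0)"
    proof (cases "Suc t0 < L")
      case True
      then have "(\<Sum>t<L. a x t * f i0 j (k + t)) = (\<Sum>t<L. (if t = Suc t0 then f i0 j (k + t) else 0))"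
        unfolding a_def t0_def by (intro sum.cong) auto
      also have "\<dots> = f i0 j (k + Suc t0)" using True by simp
      finally show ?thesis by simp
    next
      case False
      then have tL: "Suc t0 = L" using t0 by simp
      have "(\<Sum>t<L. a x t * f i0 j (k + t)) = (\<Sum>t<L. (if 1 \<le> L - t \<and> L - t \<le> Dg then c (L - t) else 0) * f i0 j (k + t))"
        unfolding a_def t0_def using False t0_def by (intro sum.cong) auto
      also have "\<dots> = (\<Sum>l=1..Dg. c l * f i0 j (k + (L - l)))"
        by (rule sum_reindex_rev[OF DL])
      also have "\<dots> = (\<Sum>l=1..Dg. c l * f i0 j (k + L - l))"
        by (intro sum.cong refl) (use DL in \<open>auto simp: Nat.add_diff_assoc\<close>)
      also have "\<dots> = f i0 j (k + L)" by (rule rec[symmetric]) (use i0 j in auto)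
      moreover have "k + L = Suc k + t0" using tL by simp
      ultimately show ?thesis by simp
    qed
    also have "\<dots> = X (Suc k) $$ (x,j)" unfolding X_def using x j by (simp add: i0_def t0_def)
    finally show "(A * X k) $$ (x,j) = X (Suc k) $$ (x,j)" .
  qed (use Ac in \<open>auto simp: X_def\<close>)
  have pw: "A ^\<^sub>m k * X 0 = X k" for k
  proof (induction k)
    case 0 then show ?case using Ac Xc by (simp add: left_mult_one_mat[OF Xc])
  next
    case (Suc k)
    have "A ^\<^sub>m Suc k * X 0 = (A * A ^\<^sub>m k) * X 0" unfolding pow_Suc_left[OF Ac] ..
    also have "\<dots> = A * (A ^\<^sub>m k * X 0)" by (rule assoc_mult_mat[OF Ac pow_carrier_mat[OF Ac] Xc])
    finally show ?case using Suc AX by simp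
  qed
  have CX: "(C * X k) $$ (i,j) = f i j k" if ij: "i < n" "j < m" for i j k
  proof -
    have iN: "i < NN"
    proof -
      have "1 * n \<le> L * n" using L1 by (intro mult_le_mono1)
      then show ?thesis unfolding NN_def using ij by linarith
    qed
    have "(C * X k) $$ (i,j) = (\<Sum>x<NN. C $$ (i,x) * X k $$ (x,j))" by (rule mult_entry[OF Cc Xc ij])
    also have "\<dots> = (\<Sum>x<NN. if x = i then X k $$ (x,j) else 0)"
      by (intro sum.cong refl) (use ij in \<open>auto simp: C_def\<close>)
    also have "\<dots> = X k $$ (i,j)" using iN by simp
    also have "\<dots> = f i j k" unfolding X_def using iN ij by simp
    finally show ?thesis .
  qed
  have "(C * A ^\<^sub>m k * X 0) $$ (i,j) = f i j k" if ij: "i < n" "j < m" for i j k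
    using assoc_mult_mat[OF Cc pow_carrier_mat[OF Ac] Xc[of 0]] pw CX[OF ij] by simp
  then show ?thesis using Cc Ac Xc[of 0] by blast
qed


lemma rec_from_rat:
  fixes p d :: "nat \<Rightarrow> nat \<Rightarrow> complex poly"
  assumes d0: "\<forall>i<n. \<forall>j<m. poly (d i j) 0 \<noteq> 0"
  shows "\<exists>L Dg c. 1 \<le> L \<and> Dg \<le> L \<and> (\<forall>i j k. i < n \<longrightarrow> j < m \<longrightarrow> L \<le> k \<longrightarrow>
     fps_nth (fps_of_poly (p i j) / fps_of_poly (d i j)) k =
       (\<Sum>l=1..Dg. c l * fps_nth (fps_of_poly (p i j) / fps_of_poly (d i j)) (k - l)))"
proof -
  define D where "D = (\<Prod>i<n. \<Prod>j<m. d i j)"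
  have PD: "poly D 0 \<noteq> 0" unfolding D_def poly_prod using d0 by simp
  have dvd: "d i j dvd D" if ij: "i < n" "j < m" for i j
  proof -
    have "d i j dvd (\<Prod>j<m. d i j)" by (rule dvd_prodI) (use ij in auto)
    also have "\<dots> dvd D" unfolding D_def by (rule dvd_prodI[where f="\<lambda>i. \<Prod>j<m. d i j"]) (use ij in auto)
    finally show ?thesis .
  qed
  define Q where "Q i j = (D div d i j) * p i j" for i j
  define K where "K = (\<Sum>i<n. \<Sum>j<m. degree (Q i j))"
  have degK: "degree (Q i j) \<le> K" if ij: "i < n" "j < m" for i j
  proof -
    have "degree (Q i j) \<le> (\<Sum>j<m. degree (Q i j))"
      by (rule member_le_sum[where f="\<lambda>j. degree (Q i j)"]) (use ij in auto)
    also have "\<dots> \<le> K" unfolding K_def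
      by (rule member_le_sum[where f="\<lambda>i. \<Sum>j<m. degree (Q i j)"]) (use ij in auto)
    finally show ?thesis .
  qed
  define Dg where "Dg = degree D"
  define L where "L = K + Dg + 1"
  define D0 where "D0 = coeff D 0"
  have D0z: "D0 \<noteq> 0" using PD unfolding D0_def by (simp add: poly_0_coeff_0)
  define c where "c l = - coeff D l / D0" for l
  have "1 \<le> L" "Dg \<le> L" unfolding L_def by auto
  moreover have "fps_nth (fps_of_poly (p i j) / fps_of_poly (d i j)) k =
       (\<Sum>l=1..Dg. c l * fps_nth (fps_of_poly (p i j) / fps_of_poly (d i j)) (k - l))"
    if ij: "i < n" "j < m" and k: "L \<le> k" for i j k
  proof -
    define F where "F = fps_of_poly (p i j) / fps_of_poly (d i j)"
    have fd0: "fps_nth (fps_of_poly (d i j)) 0 \<noteq> 0" using d0 ij by (simp add: poly_0_coeff_0)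
    have Dd: "D = d i j * (D div d i j)" using dvd[OF ij] by simp
    have dF: "fps_of_poly (d i j) * F = fps_of_poly (p i j)"
      unfolding F_def fps_divide_unit[OF fd0]
      using inverse_mult_eq_1[OF fd0] by (simp add: ac_simps)
    have hF: "fps_of_poly D * F = fps_of_poly (Q i j)"
    proof -
      have "fps_of_poly D * F = fps_of_poly (D div d i j) * (fps_of_poly (d i j) * F)"
        by (subst Dd) (simp add: fps_of_poly_mult ac_simps)
      then show ?thesis unfolding dF Q_def by (simp add: fps_of_poly_mult)
    qed
    have "coeff (Q i j) k = 0" by (rule coeff_eq_0) (use degK[OF ij] k in \<open>simp add: L_def\<close>)
    then have "fps_nth (fps_of_poly D * F) k = 0" unfolding hF by simp
    then have s0: "(\<Sum>l=0..k. coeff D l * fps_nth F (k - l)) = 0" by (simp add: fps_mult_nth)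
    have "(\<Sum>l=0..k. coeff D l * fps_nth F (k - l)) = (\<Sum>l=0..Dg. coeff D l * fps_nth F (k - l))"
      by (rule sum.mono_neutral_right) (use k in \<open>auto simp: L_def Dg_def coeff_eq_0\<close>)
    also have "\<dots> = D0 * fps_nth F k + (\<Sum>l=Suc 0..Dg. coeff D l * fps_nth F (k - l))"
      by (subst sum.atLeast_Suc_atMost) (auto simp: D0_def)
    finally have "D0 * fps_nth F k = - (\<Sum>l=1..Dg. coeff D l * fps_nth F (k - l))"
      using s0 by (simp add: eq_neg_iff_add_eq_0 add.commute)
    then have "fps_nth F k = - (\<Sum>l=1..Dg. coeff D l * fps_nth F (k - l)) / D0"
      using D0z by (simp add: field_simps)
    also have "\<dots> = (\<Sum>l=1..Dg. c l * fps_nth F (k - l))"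
      unfolding c_def by (simp add: sum_divide_distrib sum_negf[symmetric] field_simps)
    finally show ?thesis unfolding F_def .
  qed
  ultimately show ?thesis by blast
qed


lemma q_rational_intro:
  fixes C A B :: "complex mat" and P :: "complex \<Rightarrow> complex mat"
  assumes C: "C \<in> carrier_mat n N" and A: "A \<in> carrier_mat N N" and B: "B \<in> carrier_mat N m"
    and r: "r > 0"
    and inv: "\<And>z j. cmod z < r \<Longrightarrow> invertible_mat (1\<^sub>m N - ((complex_of_real (1 - q)) * z * (complex_of_real q) ^ j) \<cdot>\<^sub>m A)"
    and Pc: "\<And>z. cmod z < r \<Longrightarrow> P z \<in> carrier_mat N N"
    and lim: "\<And>z i k. cmod z < r \<Longrightarrow> i < N \<Longrightarrow> k < N \<Longrightarrow> (\<lambda>J. qpartial q A z J $$ (i, k)) \<longlonglongrightarrow> P z $$ (i, k)"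
    and TP: "\<And>z. cmod z < r \<Longrightarrow> T z = C * P z * B"
  shows "q_rational q n m T"
proof -
  have "\<forall>z. cmod z < r \<longrightarrow>
          (\<forall>j. invertible_mat (1\<^sub>m N - ((complex_of_real (1 - q)) * z * (complex_of_real q) ^ j) \<cdot>\<^sub>m A)) \<and>
          (\<exists>P. P \<in> carrier_mat N N \<and>
               (\<forall>i<N. \<forall>k<N. (\<lambda>J. qpartial q A z J $$ (i, k)) \<longlonglongrightarrow> P $$ (i, k)) \<and>
               T z = C * P * B)"
    using inv Pc lim TP by blast
  then show ?thesis unfolding q_rational_def using C A B r by blast
qed

theorem theorem5p7:
  fixes q :: real and n m :: nat and T :: "complex \<Rightarrow> complex mat"
  assumes "0 \<le> q" and "q < 1"
    and "analytic_at0_mat n m T"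
  shows "q_rational q n m T \<longleftrightarrow>
    (\<exists>p d. (\<forall>i<n. \<forall>j<m. poly (d i j) 0 \<noteq> 0) \<and> q_Borel_of q n m T p d)"
proof
  assume "q_rational q n m T"
  then obtain N C A B r where C: "C \<in> carrier_mat n N" and A: "A \<in> carrier_mat N N" and B: "B \<in> carrier_mat N m"
    and r: "r > 0" and H: "\<And>z. cmod z < r \<Longrightarrow>
          (\<forall>j. invertible_mat (1\<^sub>m N - ((complex_of_real (1 - q)) * z * (complex_of_real q) ^ j) \<cdot>\<^sub>m A)) \<and>
          (\<exists>P. P \<in> carrier_mat N N \<and>
               (\<forall>i<N. \<forall>k<N. (\<lambda>J. qpartial q A z J $$ (i, k)) \<longlonglongrightarrow> P $$ (i, k)) \<and>
               T z = C * P * B)"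
    unfolding q_rational_def by blast
  obtain r0 where r0: "r0 > 0" and H0: "\<And>z. cmod z < r0 \<Longrightarrow>
     (\<forall>j. Determinant.det (1\<^sub>m N - (complex_of_real (1-q) * z * complex_of_real q ^ j) \<cdot>\<^sub>m A) \<noteq> 0) \<and>
     cmod z * msum A < 1 \<and>
     (\<forall>i<N. \<forall>k<N. (\<lambda>J. qpartial q A z J $$ (i,k)) \<longlonglongrightarrow> Eser q A z $$ (i,k))"
    using main_lim[OF assms(1,2) A] by blast
  obtain p d where pd0: "\<forall>i<n. \<forall>j<m. poly (d i j) 0 \<noteq> 0"
    and pd: "\<forall>i<n. \<forall>j<m. \<forall>k. fps_nth (fps_of_poly (p i j) / fps_of_poly (d i j)) k = (C * A ^\<^sub>m k * B) $$ (i,j)"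
    using rational_part[OF C A B] by blast
  have "q_Borel_of q n m T p d"
    unfolding q_Borel_of_def
  proof (intro exI[of _ "min r r0"] conjI allI impI)
    show "0 < min r r0" using r r0 by simp
    fix z i j assume z: "cmod z < min r r0" and ij: "i < n" "j < m"
    obtain P where P: "P \<in> carrier_mat N N" "\<forall>i<N. \<forall>k<N. (\<lambda>J. qpartial q A z J $$ (i, k)) \<longlonglongrightarrow> P $$ (i, k)"
      "T z = C * P * B" using H[of z] z by auto
    have H0z: "cmod z * msum A < 1" "\<forall>i<N. \<forall>k<N. (\<lambda>J. qpartial q A z J $$ (i,k)) \<longlonglongrightarrow> Eser q A z $$ (i,k)"
      using H0[of z] z by auto
    have PE: "P = Eser q A z"
    proof (rule eq_matI)
      fix a b assume "a < dim_row (Eser q A z)" "b < dim_col (Eser q A z)"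
      then have ab: "a < N" "b < N" using A by (auto simp: Eser_def)
      show "P $$ (a,b) = Eser q A z $$ (a,b)"
        using LIMSEQ_unique[of "\<lambda>J. qpartial q A z J $$ (a, b)"] P(2) H0z(2) ab by blast
    qed (use P(1) A in \<open>auto simp: Eser_def\<close>)
    have "(\<lambda>k. z ^ k / complex_of_real (qfact q k) * (C * A ^\<^sub>m k * B) $$ (i,j)) sums ((C * Eser q A z * B) $$ (i,j))"
      by (rule CEB_sums[OF assms(1) C A B H0z(1) ij])
    moreover have "rat_coeff n m p d k $$ (i,j) = (C * A ^\<^sub>m k * B) $$ (i,j)" for k
      unfolding rat_coeff_def using ij pd by simp
    ultimately show "(\<lambda>k. z ^ k / complex_of_real (qfact q k) * rat_coeff n m p d k $$ (i, j)) sums T z $$ (i, j)"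
      unfolding P(3) PE by simp
  qed
  then show "\<exists>p d. (\<forall>i<n. \<forall>j<m. poly (d i j) 0 \<noteq> 0) \<and> q_Borel_of q n m T p d" using pd0 by blast
next
  assume "\<exists>p d. (\<forall>i<n. \<forall>j<m. poly (d i j) 0 \<noteq> 0) \<and> q_Borel_of q n m T p d"
  then obtain p d where pd0: "\<forall>i<n. \<forall>j<m. poly (d i j) 0 \<noteq> 0" and qb: "q_Borel_of q n m T p d" by blast
  obtain r where r: "r > 0" and Hr: "\<And>z i j. cmod z < r \<Longrightarrow> i < n \<Longrightarrow> j < m \<Longrightarrow>
        (\<lambda>k. z ^ k / complex_of_real (qfact q k) * rat_coeff n m p d k $$ (i, j)) sums (T z $$ (i, j))"
    using qb unfolding q_Borel_of_def by blast
  define f where "f i j k = fps_nth (fps_of_poly (p i j) / fps_of_poly (d i j)) k" for i j k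
  obtain L Dg c where L: "1 \<le> L" "Dg \<le> L" and rec: "\<forall>i j k. i < n \<longrightarrow> j < m \<longrightarrow> L \<le> k \<longrightarrow>
     f i j k = (\<Sum>l=1..Dg. c l * f i j (k - l))"
    using rec_from_rat[OF pd0] unfolding f_def by blast
  obtain N C A B where C: "C \<in> carrier_mat n N" and A: "A \<in> carrier_mat N N" and B: "B \<in> carrier_mat N m"
    and CAB: "\<forall>i<n. \<forall>j<m. \<forall>k. (C * A ^\<^sub>m k * B) $$ (i,j) = f i j k"
    using realize[of L Dg n m f c] L rec by blast
  obtain r0 where r0: "r0 > 0" and H0: "\<And>z. cmod z < r0 \<Longrightarrow>
     (\<forall>j. Determinant.det (1\<^sub>m N - (complex_of_real (1-q) * z * complex_of_real q ^ j) \<cdot>\<^sub>m A) \<noteq> 0) \<and>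
     cmod z * msum A < 1 \<and>
     (\<forall>i<N. \<forall>k<N. (\<lambda>J. qpartial q A z J $$ (i,k)) \<longlonglongrightarrow> Eser q A z $$ (i,k))"
    using main_lim[OF assms(1,2) A] by blast
  have Tc: "T z \<in> carrier_mat n m" for z using assms(3) unfolding analytic_at0_mat_def by blast
  show "q_rational q n m T"
  proof (rule q_rational_intro[OF C A B, where r="min r r0" and P="\<lambda>z. Eser q A z"])
    show "0 < min r r0" using r r0 by simp
    show "Eser q A z \<in> carrier_mat N N" for z by (rule Eser_carrier[OF A])
    fix z assume z: "cmod z < min r r0"
    have H0z: "\<forall>j. Determinant.det (1\<^sub>m N - (complex_of_real (1-q) * z * complex_of_real q ^ j) \<cdot>\<^sub>m A) \<noteq> 0"
      "cmod z * msum A < 1" "\<forall>i<N. \<forall>k<N. (\<lambda>J. qpartial q A z J $$ (i,k)) \<longlonglongrightarrow> Eser q A z $$ (i,k)"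
      using H0[of z] z by auto
    show "invertible_mat (1\<^sub>m N - (complex_of_real (1 - q) * z * complex_of_real q ^ j) \<cdot>\<^sub>m A)" for j
      by (rule minv_props(4)[of _ N]) (use A H0z(1) in auto)
    show "(\<lambda>J. qpartial q A z J $$ (i, k)) \<longlonglongrightarrow> Eser q A z $$ (i, k)" if "i < N" "k < N" for i k
      using H0z(3) that by blast
    have TE: "T z = C * Eser q A z * B"
    proof (rule eq_matI)
      fix i j assume "i < dim_row (C * Eser q A z * B)" "j < dim_col (C * Eser q A z * B)"
      then have ij: "i < n" "j < m" using C B by auto
      have s1: "(\<lambda>k. z ^ k / complex_of_real (qfact q k) * (C * A ^\<^sub>m k * B) $$ (i,j)) sums ((C * Eser q A z * B) $$ (i,j))"
        by (rule CEB_sums[OF assms(1) C A B H0z(2) ij])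
      have "rat_coeff n m p d k $$ (i,j) = (C * A ^\<^sub>m k * B) $$ (i,j)" for k
        unfolding rat_coeff_def using ij CAB by (simp add: f_def)
      then have s2: "(\<lambda>k. z ^ k / complex_of_real (qfact q k) * (C * A ^\<^sub>m k * B) $$ (i,j)) sums (T z $$ (i,j))"
        using Hr[of z i j] z ij by simp
      show "T z $$ (i,j) = (C * Eser q A z * B) $$ (i,j)" using sums_unique2[OF s2 s1] .
    qed (use Tc[of z] C B in auto)
    show "T z = C * Eser q A z * B" by (rule TE)
  qed
qed

end
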